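(* For every regular triangulation $T$ of $[0,1]^L$ there exists a generic fitness landscape $w:\{0,1\}^L\to\mathbb{R}_{\ge 0}$ that induces $T$ and whose fitness graph is the all arrows up graph, i.e. every edge of the cube is directed toward the endpoint with more $1$'s (so that fitness decreases with distance from the unique peak $1\cdots1$).
   Context: Genotypes $g\in\{0,1\}^L$ are vertices of $[0,1]^L$. The triangulation induced by a fitness landscape $w$ is the regular subdivision of $[0,1]^L$ obtained by projecting the upper faces of $\mathrm{conv}\{(g,w_g)\}\subset\mathbb{R}^{L+1}$; a triangulation is regular if it is induced in this way by some landscape; $w$ is generic if all $w_g$ are distinct and the induced subdivision is a triangulation. The fitness graph directs each edge between Hamming neighbours toward the genotype of higher fitness. *)

theory Defs
  imports "HOL-Analysis.Analysis"
begin

text \<open>Genotypes are the vertices of the cube [0,1]^L, with L = CARD('n).\<close>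
definition cube_vertices :: "(real ^ 'n) set" where
  "cube_vertices = {x. \<forall>i. x $ i = 0 \<or> x $ i = 1}"

text \<open>Cells (of all dimensions) of the regular subdivision induced by a landscape w:
  vertex sets of the upper faces of conv{(g, w g)}, i.e. the nonempty sets of genotypes on
  which some non-vertical affine function a.x + b that dominates w on the cube is attained.\<close>
definition induced_subdivision :: "(real ^ 'n \<Rightarrow> real) \<Rightarrow> (real ^ 'n) set set" where
  "induced_subdivision w =
     {S. S \<noteq> {} \<and> (\<exists>a b. (\<forall>g\<in>cube_vertices. w g \<le> a \<bullet> g + b) \<and>
                         S = {g \<in> cube_vertices. a \<bullet> g + b = w g})}"

definition is_triangulation :: "(real ^ 'n) set set \<Rightarrow> bool" where
  "is_triangulation T \<longleftrightarrow> (\<forall>S\<in>T. \<not> affine_dependent S)"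

definition regular_triangulation :: "(real ^ 'n) set set \<Rightarrow> bool" where
  "regular_triangulation T \<longleftrightarrow>
     (\<exists>w. induced_subdivision w = T) \<and> is_triangulation T"

definition generic_landscape :: "(real ^ 'n \<Rightarrow> real) \<Rightarrow> bool" where
  "generic_landscape w \<longleftrightarrow>
     inj_on w cube_vertices \<and> is_triangulation (induced_subdivision w)"

definition set_coord :: "real ^ 'n \<Rightarrow> 'n \<Rightarrow> real ^ 'n" where
  "set_coord x i = (\<chi> j. if j = i then 1 else x $ j)"

definition all_arrows_up :: "(real ^ 'n \<Rightarrow> real) \<Rightarrow> bool" where
  "all_arrows_up w \<longleftrightarrow>
     (\<forall>g\<in>cube_vertices. \<forall>i. g $ i = 0 \<longrightarrow> w g < w (set_coord g i))"

end

theory Submission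
  imports Defs
begin

lemma finite_cube: "finite (cube_vertices :: (real ^ 'n) set)"
proof -
  have "cube_vertices \<subseteq> (\<lambda>S. (\<chi> i. if i \<in> S then 1 else 0) :: real ^ 'n) ` UNIV"
  proof
    fix x :: "real ^ 'n" assume "x \<in> cube_vertices"
    hence "x = (\<chi> i. if i \<in> {j. x $ j = 1} then 1 else 0)"
      by (auto simp: cube_vertices_def vec_eq_iff)
    thus "x \<in> range (\<lambda>S. (\<chi> i. if i \<in> S then 1 else 0) :: real ^ 'n)" by blast
  qed
  thus ?thesis by (rule finite_subset) simp
qed

lemma set_coord_cube: "g \<in> cube_vertices \<Longrightarrow> set_coord g i \<in> cube_vertices"
  by (auto simp: cube_vertices_def set_coord_def)

lemma inner_set_coord:
  assumes "g $ i = 0"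
  shows "a \<bullet> set_coord g i = a \<bullet> g + a $ i"
proof -
  have "a \<bullet> set_coord g i - a \<bullet> g = (\<Sum>j\<in>UNIV. a $ j * (set_coord g i $ j - g $ j))"
    by (simp add: inner_vec_def sum_subtractf[symmetric] algebra_simps)
  also have "\<dots> = (\<Sum>j\<in>UNIV. if j = i then a $ i else 0)"
    by (rule sum.cong) (auto simp: set_coord_def assms)
  also have "\<dots> = a $ i" by simp
  finally show ?thesis by simp
qed

lemma subdiv_affine:
  "induced_subdivision (\<lambda>g. w g + c \<bullet> g + d) = induced_subdivision w"
proof -
  have A: "(\<exists>a b. (\<forall>g\<in>cube_vertices. w g + c \<bullet> g + d \<le> a \<bullet> g + b) \<and>
             S = {g \<in> cube_vertices. a \<bullet> g + b = w g + c \<bullet> g + d}) \<longleftrightarrow>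
           (\<exists>a b. (\<forall>g\<in>cube_vertices. w g \<le> a \<bullet> g + b) \<and>
             S = {g \<in> cube_vertices. a \<bullet> g + b = w g})" for S
  proof
    assume "\<exists>a b. (\<forall>g\<in>cube_vertices. w g + c \<bullet> g + d \<le> a \<bullet> g + b) \<and>
             S = {g \<in> cube_vertices. a \<bullet> g + b = w g + c \<bullet> g + d}"
    then obtain a b where h: "\<forall>g\<in>cube_vertices. w g + c \<bullet> g + d \<le> a \<bullet> g + b"
      "S = {g \<in> cube_vertices. a \<bullet> g + b = w g + c \<bullet> g + d}" by blast
    show "\<exists>a b. (\<forall>g\<in>cube_vertices. w g \<le> a \<bullet> g + b) \<and>
             S = {g \<in> cube_vertices. a \<bullet> g + b = w g}"
      apply (rule exI[of _ "a - c"], rule exI[of _ "b - d"])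
      using h by (auto simp: inner_diff_left)
  next
    assume "\<exists>a b. (\<forall>g\<in>cube_vertices. w g \<le> a \<bullet> g + b) \<and>
             S = {g \<in> cube_vertices. a \<bullet> g + b = w g}"
    then obtain a b where h: "\<forall>g\<in>cube_vertices. w g \<le> a \<bullet> g + b"
      "S = {g \<in> cube_vertices. a \<bullet> g + b = w g}" by blast
    show "\<exists>a b. (\<forall>g\<in>cube_vertices. w g + c \<bullet> g + d \<le> a \<bullet> g + b) \<and>
             S = {g \<in> cube_vertices. a \<bullet> g + b = w g + c \<bullet> g + d}"
      apply (rule exI[of _ "a + c"], rule exI[of _ "b + d"])
      using h by (auto simp: inner_add_left)
  qed
  show ?thesis unfolding induced_subdivision_def using A by auto
qed

theorem mainTheorem6:
  fixes T :: "(real ^ 'n) set set"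
  assumes "regular_triangulation T"
  shows "\<exists>w :: real ^ 'n \<Rightarrow> real.
           (\<forall>g\<in>cube_vertices. 0 \<le> w g) \<and> generic_landscape w \<and>
           induced_subdivision w = T \<and> all_arrows_up w"
proof -
  obtain w where wT: "induced_subdivision w = T" and tri: "is_triangulation T"
    using assms unfolding regular_triangulation_def by blast
  define C where "C = (cube_vertices :: (real ^ 'n) set)"
  have fC: "finite C" unfolding C_def by (rule finite_cube)
  define K where "K = 2 * (\<Sum>g\<in>C. \<bar>w g\<bar>)"
  have wK: "\<bar>w g\<bar> \<le> K / 2" if "g \<in> C" for g
    unfolding K_def using member_le_sum[of g C "\<lambda>g. \<bar>w g\<bar>"] fC that by auto
  define P where "P = {(g, h). g \<in> C \<and> h \<in> C \<and> g \<noteq> h}"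
  define B where "B = (\<Union>p\<in>P. {x :: real ^ 'n. (fst p - snd p) \<bullet> x = w (snd p) - w (fst p)})"
  have negB: "negligible B"
    unfolding B_def
  proof (rule negligible_Union)
    show "finite ((\<lambda>p. {x :: real ^ 'n. (fst p - snd p) \<bullet> x = w (snd p) - w (fst p)}) ` P)"
      unfolding P_def using fC by (auto intro: finite_subset[of _ "C \<times> C"])
    show "negligible X" if "X \<in> (\<lambda>p. {x :: real ^ 'n. (fst p - snd p) \<bullet> x = w (snd p) - w (fst p)}) ` P" for X
      using that unfolding P_def by (auto intro!: negligible_hyperplane)
  qed
  define U where "U = ball ((\<chi> i. K + 1) :: real ^ 'n) 1"
  have "\<not> negligible U" unfolding U_def by (rule open_not_negligible) auto
  hence "\<not> U \<subseteq> B" using negB negligible_subset by blast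
  then obtain a where aU: "a \<in> U" and aB: "a \<notin> B" by blast
  have aK: "K < a $ i" for i
  proof -
    have "\<bar>((\<chi> i. K + 1) - a) $ i\<bar> < 1"
      using aU component_le_norm_cart[of "(\<chi> i. K + 1) - a" i]
      unfolding U_def by (auto simp: dist_norm)
    thus ?thesis by auto
  qed
  define v where "v = (\<lambda>g. w g + a \<bullet> g)"
  define d where "d = (\<Sum>g\<in>C. \<bar>v g\<bar>)"
  define w' where "w' = (\<lambda>g. w g + a \<bullet> g + d)"
  have nn: "\<forall>g\<in>cube_vertices. 0 \<le> w' g"
  proof
    fix g :: "real ^ 'n" assume "g \<in> cube_vertices"
    hence "\<bar>v g\<bar> \<le> d" unfolding d_def C_def using member_le_sum[of g cube_vertices "\<lambda>g. \<bar>v g\<bar>"] finite_cube by auto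
    thus "0 \<le> w' g" unfolding w'_def v_def by auto
  qed
  have sub: "induced_subdivision w' = T" unfolding w'_def subdiv_affine wT ..
  have inj: "inj_on w' cube_vertices"
  proof (rule inj_onI)
    fix g h assume g: "g \<in> cube_vertices" and h: "h \<in> cube_vertices" and e: "w' g = w' h"
    show "g = h"
    proof (rule ccontr)
      assume "g \<noteq> h"
      hence "(g, h) \<in> P" unfolding P_def C_def using g h by auto
      moreover have "(g - h) \<bullet> a = w h - w g"
        using e unfolding w'_def by (simp add: inner_diff_left inner_diff_right inner_commute algebra_simps)
      ultimately have "a \<in> B" unfolding B_def by (intro UN_I[of "(g,h)"]) auto
      thus False using aB by simp
    qed
  qed
  have up: "all_arrows_up w'"
    unfolding all_arrows_up_def
  proof (intro ballI allI impI)
    fix g :: "real ^ 'n" and i assume g: "g \<in> cube_vertices" and gi: "g $ i = 0"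
    have "\<bar>w g\<bar> \<le> K / 2" "\<bar>w (set_coord g i)\<bar> \<le> K / 2"
      using wK g set_coord_cube[OF g] unfolding C_def by auto
    moreover have "K < a $ i" by (rule aK)
    ultimately show "w' g < w' (set_coord g i)"
      unfolding w'_def using inner_set_coord[OF gi, of a] by auto
  qed
  show ?thesis
    apply (rule exI[of _ w'])
    using nn inj sub up tri unfolding generic_landscape_def by auto
qed

end
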